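(* Let $P_\star\in\mathcal{P}$, let $P_n$ be the empirical distribution of $n$ i.i.d. draws from $P_\star$, and let $\widehat P_n\in\mathcal{P}$ be an estimate of $P_\star$ that is independent of $P_n$. Write $\pi_n=\pi_{\widehat P_n}$, $\theta_{n,a}=\theta_{\widehat P_n,a}$, $\psi_n=\psi_{\widehat P_n}$, $\phi_n=\phi_{\widehat P_n}$, and define the remainder $\mathcal{R}_n=\psi_n+\mathbb{E}_{Z\sim P_\star}[\phi_n(Z)]-\psi_\star$ (with $\widehat P_n$ held fixed in the expectation). If (i) $\|\pi_n-\pi_\star\|_{L^2(P_{\star,X})}=O_p(n^{-\tau})$ for some scalar $\tau>0$, and (ii) $\|\theta_{n,a}-\theta_{\star,a}\|_{L^2(P_{\star,X};\mathcal{H})}=O_p(n^{-\gamma_a})$ for some scalar $\gamma_a>0$, for each $a\in\{0,1\}$, then $\|\mathcal{R}_n\|_{\mathcal{H}}=O_p\big(n^{-[\tau+\min\{\gamma_1,\gamma_0\}]}\big)$. In particular, if $\tau+\min\{\gamma_1,\gamma_0\}>1/2$, then $\|\mathcal{R}_n\|_{\mathcal{H}}=o_p(n^{-1/2})$.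
   Context: $\mathcal{X},\mathcal{Y}$ Polish; $\mathcal{Z}=\mathcal{X}\times\{0,1\}\times\mathcal{Y}$, $Z=(X,A,Y)$. $\mathcal{P}$ is a dominated, locally nonparametric collection of distributions on $\mathcal{Z}$ with $P_{Y\mid A,X}$ non-degenerate and strong positivity: fixed $\eta>0$ with $\eta\le\pi_P(x)\le1-\eta$ $P_X$-a.e. for all $P\in\mathcal{P}$, where $\pi_P(x)=P(A=1\mid X=x)$. $k,\ell$ bounded characteristic kernels with feature maps $K_x,L_y$; $\mathcal{H}=\mathcal{H}_\mathcal{X}\otimes\mathcal{H}_\mathcal{Y}$ real separable tensor-product RKHS with feature map $\Lambda_{x,y}=K_x\otimes L_y$. For $P\in\mathcal{P}$: $\theta_{P,a}(x)=K_x\otimes\mathbb{E}_P[L_Y\mid A=a,X=x]$, $\psi_P=\mathbb{E}_P[\theta_{P,1}(X)-\theta_{P,0}(X)]$, $\phi_P(x,a,y)=(\frac{a}{\pi_P(x)}-\frac{1-a}{1-\pi_P(x)})(\Lambda_{x,y}-\theta_{P,a}(x))+\theta_{P,1}(x)-\theta_{P,0}(x)-\psi_P$. Subscript $\star$ denotes evaluation at $P_\star$. $\|f\|^2_{L^2(P_{\star,X})}=\int f^2dP_{\star,X}$, $\|g\|^2_{L^2(P_{\star,X};\mathcal{H})}=\int\|g(x)\|^2_{\mathcal{H}}P_{\star,X}(dx)$. *)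

theory Defs
  imports "HOL-Probability.Probability"
begin

definition Zspace :: "('x::topological_space \<times> bool \<times> 'y::topological_space) measure" where
  "Zspace = borel \<Otimes>\<^sub>M (count_space UNIV \<Otimes>\<^sub>M borel)"

text \<open>A distribution P of Z = (X,A,Y) is described by its X-marginal P_X, the propensity
  score pi_P(x) = P(A = 1 | X = x), and the conditional laws P_{Y|A=a,X=x}.\<close>

record ('x, 'y) model =
  mX    :: "'x measure"
  mprop :: "'x \<Rightarrow> real"
  mcond :: "bool \<Rightarrow> 'x \<Rightarrow> 'y measure"

definition valid_model :: "('x::topological_space, 'y::topological_space) model \<Rightarrow> bool" where
  "valid_model P \<longleftrightarrow>
     prob_space (mX P) \<and> sets (mX P) = sets borel \<and>
     mprop P \<in> borel_measurable borel \<and> (\<forall>x. 0 \<le> mprop P x \<and> mprop P x \<le> 1) \<and>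
     (\<forall>a. mcond P a \<in> measurable borel (subprob_algebra borel)) \<and>
     (\<forall>a x. prob_space (mcond P a x) \<and> sets (mcond P a x) = sets borel)"

definition dist :: "('x::topological_space, 'y::topological_space) model \<Rightarrow> ('x \<times> bool \<times> 'y) measure" where
  "dist P = Giry_Monad.bind (mX P) (\<lambda>x.
             Giry_Monad.bind (measure_pmf (bernoulli_pmf (mprop P x))) (\<lambda>a.
               Giry_Monad.bind (mcond P a x) (\<lambda>y. return Zspace (x, a, y))))"

definition dominated :: "('x::topological_space, 'y::topological_space) model set \<Rightarrow> bool" where
  "dominated \<P> \<longleftrightarrow> (\<exists>\<mu>. sigma_finite_measure \<mu> \<and> sets \<mu> = sets Zspace \<and>
                        (\<forall>P\<in>\<P>. absolutely_continuous \<mu> (dist P)))"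

definition nondegenerate :: "('x::topological_space, 'y::topological_space) model \<Rightarrow> bool" where
  "nondegenerate P \<longleftrightarrow> (AE x in mX P. \<forall>a. \<not> (\<exists>y. mcond P a x = return borel y))"

text \<open>Strong positivity. pi_P is only determined P_X-a.e.; the model fixes the (always
  available) version of pi_P that satisfies the bound at every x.\<close>
definition strong_positivity :: "real \<Rightarrow> ('x::topological_space, 'y) model \<Rightarrow> bool" where
  "strong_positivity \<eta> P \<longleftrightarrow> (\<forall>x. \<eta> \<le> mprop P x \<and> mprop P x \<le> 1 - \<eta>)"

text \<open>K is a feature map of the kernel k into the RKHS H (modelled up to isometry as a
  real Hilbert space type in which the features span a dense subspace).\<close>
definition rkhs_feature_map :: "('x \<Rightarrow> 'x \<Rightarrow> real) \<Rightarrow> ('x \<Rightarrow> 'h::real_inner) \<Rightarrow> bool" where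
  "rkhs_feature_map k K \<longleftrightarrow> (\<forall>x x'. k x x' = inner (K x) (K x')) \<and> closure (span (range K)) = UNIV"

definition bounded_kernel :: "('x \<Rightarrow> 'x \<Rightarrow> real) \<Rightarrow> bool" where
  "bounded_kernel k \<longleftrightarrow> (\<exists>B. \<forall>x. k x x \<le> B)"

definition characteristic :: "('x::topological_space \<Rightarrow> 'h::{real_inner,banach,second_countable_topology}) \<Rightarrow> bool" where
  "characteristic K \<longleftrightarrow>
     (\<forall>P Q. prob_space P \<longrightarrow> prob_space Q \<longrightarrow> sets P = sets borel \<longrightarrow> sets Q = sets borel \<longrightarrow>
            integral\<^sup>L P K = integral\<^sup>L Q K \<longrightarrow> P = Q)"

definition tensor_product :: "('hx::real_inner \<Rightarrow> 'hy::real_inner \<Rightarrow> 'h::real_inner) \<Rightarrow> bool" where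
  "tensor_product tensor \<longleftrightarrow>
     (\<forall>u v u' v'. inner (tensor u v) (tensor u' v') = inner u u' * inner v v') \<and>
     closure (span (range (case_prod tensor))) = UNIV"

definition theta :: "('hx \<Rightarrow> 'hy \<Rightarrow> 'h) \<Rightarrow> ('x \<Rightarrow> 'hx) \<Rightarrow> ('y \<Rightarrow> 'hy::{banach,second_countable_topology})
    \<Rightarrow> ('x, 'y) model \<Rightarrow> bool \<Rightarrow> 'x \<Rightarrow> 'h" where
  "theta tensor K L P a x = tensor (K x) (integral\<^sup>L (mcond P a x) L)"

definition psi :: "('hx \<Rightarrow> 'hy \<Rightarrow> 'h::{banach,second_countable_topology}) \<Rightarrow> ('x \<Rightarrow> 'hx)
    \<Rightarrow> ('y \<Rightarrow> 'hy::{banach,second_countable_topology}) \<Rightarrow> ('x, 'y) model \<Rightarrow> 'h" where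
  "psi tensor K L P = (\<integral>x. theta tensor K L P True x - theta tensor K L P False x \<partial>mX P)"

definition phi :: "('hx \<Rightarrow> 'hy \<Rightarrow> 'h::{banach,second_countable_topology}) \<Rightarrow> ('x \<Rightarrow> 'hx)
    \<Rightarrow> ('y \<Rightarrow> 'hy::{banach,second_countable_topology}) \<Rightarrow> ('x, 'y) model \<Rightarrow> 'x \<times> bool \<times> 'y \<Rightarrow> 'h" where
  "phi tensor K L P z = (case z of (x, a, y) \<Rightarrow>
      ((if a then 1 else 0) / mprop P x - (if a then 0 else 1) / (1 - mprop P x))
        *\<^sub>R (tensor (K x) (L y) - theta tensor K L P a x)
      + theta tensor K L P True x - theta tensor K L P False x - psi tensor K L P)"

definition remainder :: "('hx \<Rightarrow> 'hy \<Rightarrow> 'h::{banach,second_countable_topology}) \<Rightarrow> ('x::topological_space \<Rightarrow> 'hx)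
    \<Rightarrow> ('y::topological_space \<Rightarrow> 'hy::{banach,second_countable_topology}) \<Rightarrow> ('x, 'y) model \<Rightarrow> ('x, 'y) model \<Rightarrow> 'h" where
  "remainder tensor K L Pstar Phat =
     psi tensor K L Phat + integral\<^sup>L (dist Pstar) (phi tensor K L Phat) - psi tensor K L Pstar"

definition L2_dist_prop :: "('x, 'y) model \<Rightarrow> ('x, 'y) model \<Rightarrow> real" where
  "L2_dist_prop Pstar P = sqrt (\<integral>x. (mprop P x - mprop Pstar x)\<^sup>2 \<partial>mX Pstar)"

definition L2_dist_theta :: "('hx \<Rightarrow> 'hy \<Rightarrow> 'h::real_normed_vector) \<Rightarrow> ('x \<Rightarrow> 'hx)
    \<Rightarrow> ('y \<Rightarrow> 'hy::{banach,second_countable_topology}) \<Rightarrow> ('x, 'y) model \<Rightarrow> ('x, 'y) model \<Rightarrow> bool \<Rightarrow> real" where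
  "L2_dist_theta tensor K L Pstar P a =
     sqrt (\<integral>x. (norm (theta tensor K L P a x - theta tensor K L Pstar a x))\<^sup>2 \<partial>mX Pstar)"

text \<open>Independence of two random elements with possibly different codomain types
  (the library's indep_var requires equal codomains).\<close>
definition indep_rv :: "'w measure \<Rightarrow> 'a measure \<Rightarrow> ('w \<Rightarrow> 'a) \<Rightarrow> 'b measure \<Rightarrow> ('w \<Rightarrow> 'b) \<Rightarrow> bool" where
  "indep_rv M S X T Y \<longleftrightarrow> X \<in> measurable M S \<and> Y \<in> measurable M T \<and>
     (\<forall>A\<in>sets S. \<forall>B\<in>sets T.
        measure M (X -` A \<inter> Y -` B \<inter> space M) = measure M (X -` A \<inter> space M) * measure M (Y -` B \<inter> space M))"

section \<open>Stochastic order symbols (outer-probability version, no measurability needed)\<close>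

definition bigOp :: "'w measure \<Rightarrow> (nat \<Rightarrow> 'w \<Rightarrow> real) \<Rightarrow> (nat \<Rightarrow> real) \<Rightarrow> bool" where
  "bigOp M X r \<longleftrightarrow> (\<forall>\<epsilon>>0. \<exists>C N. \<forall>n\<ge>N. \<exists>E\<in>sets M.
       measure M E \<ge> 1 - \<epsilon> \<and> (\<forall>\<omega>\<in>E. \<bar>X n \<omega>\<bar> \<le> C * r n))"

definition littleOp :: "'w measure \<Rightarrow> (nat \<Rightarrow> 'w \<Rightarrow> real) \<Rightarrow> (nat \<Rightarrow> real) \<Rightarrow> bool" where
  "littleOp M X r \<longleftrightarrow> (\<forall>\<delta>>0. \<forall>\<epsilon>>0. \<exists>N. \<forall>n\<ge>N. \<exists>E\<in>sets M.
       measure M E \<ge> 1 - \<epsilon> \<and> (\<forall>\<omega>\<in>E. \<bar>X n \<omega>\<bar> \<le> \<delta> * r n))"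

end

theory Submission
  imports Defs
begin


lemma tensor_norm:
  assumes "tensor_product tensor"
  shows "norm (tensor u v) = norm u * norm v"
proof -
  have "norm (tensor u v) ^ 2 = (norm u * norm v)^2"
    using assms unfolding tensor_product_def
    by (simp add: power2_norm_eq_inner power_mult_distrib)
  then show ?thesis by (simp add: power2_eq_iff_nonneg)
qed

lemma tensor_add_left:
  assumes "tensor_product tensor"
  shows "tensor (u + u') v = tensor u v + tensor u' v"
proof -
  have T: "\<And>u v u' v'. inner (tensor u v) (tensor u' v') = inner u u' * inner v v'"
    using assms unfolding tensor_product_def by blast
  have "inner (tensor (u + u') v - tensor u v - tensor u' v) (tensor (u + u') v - tensor u v - tensor u' v) = 0"
    by (simp add: inner_diff_left inner_diff_right T inner_add_left inner_add_right inner_commute algebra_simps)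
  then have "tensor (u + u') v - tensor u v - tensor u' v = 0" by (simp only: inner_eq_zero_iff)
  then show ?thesis by (simp add: algebra_simps)
qed

lemma tensor_add_right:
  assumes "tensor_product tensor"
  shows "tensor u (v + v') = tensor u v + tensor u v'"
proof -
  have T: "\<And>u v u' v'. inner (tensor u v) (tensor u' v') = inner u u' * inner v v'"
    using assms unfolding tensor_product_def by blast
  have "inner (tensor u (v + v') - tensor u v - tensor u v') (tensor u (v + v') - tensor u v - tensor u v') = 0"
    by (simp add: inner_diff_left inner_diff_right T inner_add_left inner_add_right inner_commute algebra_simps)
  then have "tensor u (v + v') - tensor u v - tensor u v' = 0" by (simp only: inner_eq_zero_iff)
  then show ?thesis by (simp add: algebra_simps)
qed

lemma tensor_scale_left:
  assumes "tensor_product tensor"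
  shows "tensor (c *\<^sub>R u) v = c *\<^sub>R tensor u v"
proof -
  have T: "\<And>u v u' v'. inner (tensor u v) (tensor u' v') = inner u u' * inner v v'"
    using assms unfolding tensor_product_def by blast
  have "inner (tensor (c *\<^sub>R u) v - c *\<^sub>R tensor u v) (tensor (c *\<^sub>R u) v - c *\<^sub>R tensor u v) = 0"
    by (simp add: inner_diff_left inner_diff_right T algebra_simps power2_eq_square)
  then show ?thesis by simp
qed

lemma tensor_scale_right:
  assumes "tensor_product tensor"
  shows "tensor u (c *\<^sub>R v) = c *\<^sub>R tensor u v"
proof -
  have T: "\<And>u v u' v'. inner (tensor u v) (tensor u' v') = inner u u' * inner v v'"
    using assms unfolding tensor_product_def by blast
  have "inner (tensor u (c *\<^sub>R v) - c *\<^sub>R tensor u v) (tensor u (c *\<^sub>R v) - c *\<^sub>R tensor u v) = 0"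
    by (simp add: inner_diff_left inner_diff_right T algebra_simps power2_eq_square)
  then show ?thesis by simp
qed

lemma tensor_bb:
  assumes "tensor_product tensor"
  shows "bounded_bilinear tensor"
proof
  fix a a' b b' and r :: real
  show "tensor (a + a') b = tensor a b + tensor a' b" by (rule tensor_add_left[OF assms])
  show "tensor a (b + b') = tensor a b + tensor a b'" by (rule tensor_add_right[OF assms])
  show "tensor (r *\<^sub>R a) b = r *\<^sub>R tensor a b" by (rule tensor_scale_left[OF assms])
  show "tensor a (r *\<^sub>R b) = r *\<^sub>R tensor a b" by (rule tensor_scale_right[OF assms])
next
  show "\<exists>K. \<forall>a b. norm (tensor a b) \<le> norm a * norm b * K"
    by (rule exI[of _ 1]) (simp add: tensor_norm[OF assms])
qed

lemma tensor_cont: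
  assumes "tensor_product tensor"
  shows "continuous_on UNIV (\<lambda>p. tensor (fst p) (snd p))"
  by (rule bounded_bilinear.continuous_on[OF tensor_bb[OF assms]]) (intro continuous_on_fst continuous_on_snd continuous_on_id)+



lemma pmf_bern: "0 \<le> p \<Longrightarrow> p \<le> 1 \<Longrightarrow> pmf (bernoulli_pmf p) s = (if s then p else 1 - p)"
  by (cases s) auto

lemma bern_meas:
  assumes [measurable]: "p \<in> borel_measurable M" and p01: "\<And>x. 0 \<le> p x \<and> p x \<le> 1"
  shows "(\<lambda>x. measure_pmf (bernoulli_pmf (p x))) \<in> M \<rightarrow>\<^sub>M prob_algebra (count_space UNIV)"
proof (rule measurable_prob_algebraI)
  show "(\<lambda>x. measure_pmf (bernoulli_pmf (p x))) \<in> M \<rightarrow>\<^sub>M subprob_algebra (count_space UNIV)"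
  proof (rule measurable_subprob_algebra)
    fix A :: "bool set"
    have "(\<lambda>x. emeasure (measure_pmf (bernoulli_pmf (p x))) A) =
          (\<lambda>x. (\<Sum>s\<in>A. ennreal (if s then p x else 1 - p x)))"
      using p01 by (intro ext) (simp add: emeasure_measure_pmf_finite pmf_bern)
    also have "\<dots> \<in> borel_measurable M" by measurable
    finally show "(\<lambda>x. emeasure (measure_pmf (bernoulli_pmf (p x))) A) \<in> borel_measurable M" .
  qed (auto simp: subprob_space_measure_pmf)
qed (simp add: prob_space_measure_pmf)

definition kern :: "('x::topological_space, 'y::topological_space) model \<Rightarrow> 'x \<Rightarrow> ('x \<times> bool \<times> 'y) measure" where
  "kern P x = Giry_Monad.bind (measure_pmf (bernoulli_pmf (mprop P x))) (\<lambda>a.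
               Giry_Monad.bind (mcond P a x) (\<lambda>y. return Zspace (x, a, y)))"

lemma dist_kern: "dist P = Giry_Monad.bind (mX P) (kern P)"
  unfolding dist_def kern_def ..

lemma mcond_prob:
  assumes "valid_model P"
  shows "mcond P a \<in> borel \<rightarrow>\<^sub>M prob_algebra borel"
  using assms unfolding valid_model_def by (auto intro!: measurable_prob_algebraI)

lemma kern_meas:
  assumes "valid_model P"
  shows "kern P \<in> (borel :: 'x::topological_space measure) \<rightarrow>\<^sub>M prob_algebra (Zspace :: ('x \<times> bool \<times> 'y::topological_space) measure)"
proof -
  have [measurable]: "mprop P \<in> borel_measurable borel" using assms unfolding valid_model_def by auto
  have B[measurable]: "(\<lambda>x. measure_pmf (bernoulli_pmf (mprop P x))) \<in> borel \<rightarrow>\<^sub>M prob_algebra (count_space UNIV)"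
    by (rule bern_meas) (use assms in \<open>auto simp: valid_model_def\<close>)
  have [measurable]: "mcond P True \<in> borel \<rightarrow>\<^sub>M prob_algebra borel" "mcond P False \<in> borel \<rightarrow>\<^sub>M prob_algebra borel"
    using mcond_prob[OF assms] by auto
  have C: "(\<lambda>(x, a). mcond P a x) = (\<lambda>p. if snd p then mcond P True (fst p) else mcond P False (fst p))"
    by auto
  have C2[measurable]: "(\<lambda>(x, a). mcond P a x) \<in> (borel \<Otimes>\<^sub>M count_space UNIV) \<rightarrow>\<^sub>M prob_algebra borel"
    unfolding C by measurable
  have R[measurable]: "(\<lambda>((x, a), y). return Zspace (x, a, y)) \<in> ((borel \<Otimes>\<^sub>M count_space UNIV) \<Otimes>\<^sub>M borel) \<rightarrow>\<^sub>M prob_algebra (Zspace :: ('x \<times> bool \<times> 'y) measure)"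
  proof -
    have "(\<lambda>z. (fst (fst z), snd (fst z), snd z)) \<in> ((borel \<Otimes>\<^sub>M count_space UNIV) \<Otimes>\<^sub>M borel) \<rightarrow>\<^sub>M (Zspace :: ('x \<times> bool \<times> 'y) measure)"
      unfolding Zspace_def by measurable
    then show ?thesis
      using measurable_compose[OF _ measurable_return_prob_space] by (simp add: case_prod_beta')
  qed
  have K2: "(\<lambda>(x, a). Giry_Monad.bind (mcond P a x) (\<lambda>y. return Zspace (x, a, y))) \<in> (borel \<Otimes>\<^sub>M count_space UNIV) \<rightarrow>\<^sub>M prob_algebra (Zspace :: ('x \<times> bool \<times> 'y) measure)"
    using measurable_bind_prob_space2[OF C2, of "\<lambda>xa y. return Zspace (fst xa, snd xa, y)"] R
    by (simp add: case_prod_beta')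
  show ?thesis
    unfolding kern_def
    using measurable_bind_prob_space2[OF B, of "\<lambda>x a. Giry_Monad.bind (mcond P a x) (\<lambda>y. return Zspace (x, a, y))"] K2
    by (simp add: case_prod_beta')
qed



lemma Zspace_tuple_meas:
  assumes "sets M = sets (borel :: 'y::topological_space measure)"
  shows "(\<lambda>y. (x, a, y)) \<in> M \<rightarrow>\<^sub>M (Zspace :: ('x::topological_space \<times> bool \<times> 'y) measure)"
proof -
  have "(\<lambda>y. (x, a, y)) \<in> (borel :: 'y measure) \<rightarrow>\<^sub>M (Zspace :: ('x \<times> bool \<times> 'y) measure)"
    unfolding Zspace_def by measurable
  then show ?thesis by (simp add: measurable_cong_sets[OF assms refl])
qed

lemma integral_dist:
  fixes g :: "'x::topological_space \<times> bool \<times> 'y::topological_space \<Rightarrow> real"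
  assumes P: "valid_model P" and g[measurable]: "g \<in> borel_measurable Zspace" and gb: "\<And>z. \<bar>g z\<bar> \<le> B"
  shows "integral\<^sup>L (dist P) g = (\<integral>x. mprop P x * (\<integral>y. g (x, True, y) \<partial>mcond P True x)
                     + (1 - mprop P x) * (\<integral>y. g (x, False, y) \<partial>mcond P False x) \<partial>mX P)"
proof -
  have V: "prob_space (mX P)" "sets (mX P) = sets borel" "\<And>x. 0 \<le> mprop P x \<and> mprop P x \<le> 1"
    "\<And>a x. prob_space (mcond P a x) \<and> sets (mcond P a x) = sets borel"
    using P unfolding valid_model_def by auto
  have KM: "kern P \<in> mX P \<rightarrow>\<^sub>M prob_algebra Zspace"
    using kern_meas[OF P] measurable_cong_sets[OF V(2) refl] by blast
  have KP: "prob_space (kern P x)" for x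
    using measurable_space[OF kern_meas[OF P], of x] by (simp add: space_prob_algebra)
  have "integral\<^sup>L (dist P) g = (\<integral>x. integral\<^sup>L (kern P x) g \<partial>mX P)"
    unfolding dist_kern
  proof (rule integral_bind[where B'=1])
    show "kern P \<in> mX P \<rightarrow>\<^sub>M subprob_algebra Zspace" using measurable_prob_algebraD[OF KM] .
    show "finite_measure (mX P)" using V(1) prob_space_def by blast
    show "AE x in mX P. emeasure (kern P x) (space (kern P x)) \<le> ennreal 1"
      using KP by (simp add: prob_space.emeasure_space_1)
  qed (use gb in auto)
  also have "\<dots> = (\<integral>x. mprop P x * (\<integral>y. g (x, True, y) \<partial>mcond P True x)
                     + (1 - mprop P x) * (\<integral>y. g (x, False, y) \<partial>mcond P False x) \<partial>mX P)"
  proof (rule Bochner_Integration.integral_cong[OF refl])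
    fix x
    define k2 where "k2 a = Giry_Monad.bind (mcond P a x) (\<lambda>y. return Zspace (x, a, y))" for a
    have k2: "k2 a = distr (mcond P a x) Zspace (\<lambda>y. (x, a, y))" for a
      unfolding k2_def
      by (rule bind_return_distr') (use V(4) in \<open>auto simp: prob_space.not_empty Zspace_tuple_meas\<close>)
    have k2s: "k2 a \<in> space (subprob_algebra Zspace)" for a
      unfolding k2 using V(4)[of a x]
      by (auto simp: space_subprob_algebra Zspace_tuple_meas intro!: prob_space_imp_subprob_space prob_space.prob_space_distr)
    have "integral\<^sup>L (kern P x) g = (\<integral>a. integral\<^sup>L (k2 a) g \<partial>measure_pmf (bernoulli_pmf (mprop P x)))"
      unfolding kern_def k2_def[symmetric]
    proof (rule integral_bind[where B'=1])
      show "k2 \<in> measure_pmf (bernoulli_pmf (mprop P x)) \<rightarrow>\<^sub>M subprob_algebra Zspace"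
        using k2s by simp
      show "AE xa in measure_pmf (bernoulli_pmf (mprop P x)). emeasure (k2 xa) (space (k2 xa)) \<le> ennreal 1"
        using V(4) by (simp add: k2 emeasure_distr Zspace_tuple_meas space_distr prob_space.emeasure_le_1)
    qed (use gb in \<open>auto intro: prob_space_measure_pmf simp: prob_space_def\<close>)
    also have "\<dots> = integral\<^sup>L (k2 True) g * mprop P x + integral\<^sup>L (k2 False) g * (1 - mprop P x)"
      using V(3)[of x] by simp
    finally have *: "integral\<^sup>L (kern P x) g = integral\<^sup>L (k2 True) g * mprop P x + integral\<^sup>L (k2 False) g * (1 - mprop P x)" .
    have I2: "integral\<^sup>L (k2 a) g = (\<integral>y. g (x, a, y) \<partial>mcond P a x)" for a
      unfolding k2 by (rule integral_distr) (use V(4) in \<open>auto simp: Zspace_tuple_meas\<close>)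
    show "integral\<^sup>L (kern P x) g = mprop P x * (\<integral>y. g (x, True, y) \<partial>mcond P True x)
                     + (1 - mprop P x) * (\<integral>y. g (x, False, y) \<partial>mcond P False x)"
      by (simp add: * I2 mult.commute)
  qed
  finally show ?thesis .
qed



lemma bint:
  fixes f :: "'a \<Rightarrow> real"
  assumes "finite_measure M" "f \<in> borel_measurable M" "\<And>x. \<bar>f x\<bar> \<le> B"
  shows "integrable M f"
  using finite_measure.integrable_const_bound[OF assms(1), of f B] assms(2,3) by auto

lemma CS_real:
  fixes f g :: "'a \<Rightarrow> real"
  assumes fin: "finite_measure M" and [measurable]: "f \<in> borel_measurable M" "g \<in> borel_measurable M"
    and fb: "\<And>x. \<bar>f x\<bar> \<le> Bf" and gb: "\<And>x. \<bar>g x\<bar> \<le> Bg"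
  shows "(\<integral>x. \<bar>f x * g x\<bar> \<partial>M) \<le> sqrt (\<integral>x. (f x)\<^sup>2 \<partial>M) * sqrt (\<integral>x. (g x)\<^sup>2 \<partial>M)"
proof -
  have Bf: "0 \<le> Bf" using fb[of undefined] by linarith
  have Bg: "0 \<le> Bg" using gb[of undefined] by linarith
  have i1: "integrable M (\<lambda>x. \<bar>f x * g x\<bar>)"
    by (rule bint[OF fin, where B="Bf*Bg"]) (auto simp: abs_mult intro!: mult_mono fb gb Bf)
  have i2: "integrable M (\<lambda>x. (f x)\<^sup>2)"
    by (rule bint[OF fin, where B="Bf*Bf"]) (simp_all only: power2_eq_square abs_mult mult_mono[OF fb fb Bf abs_ge_zero] \<open>f \<in> borel_measurable M\<close> borel_measurable_times)
  have i3: "integrable M (\<lambda>x. (g x)\<^sup>2)"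
    by (rule bint[OF fin, where B="Bg*Bg"]) (simp_all only: power2_eq_square abs_mult mult_mono[OF gb gb Bg abs_ge_zero] \<open>g \<in> borel_measurable M\<close> borel_measurable_times)
  have CS: "(\<integral>\<^sup>+x. ennreal \<bar>f x\<bar> * ennreal \<bar>g x\<bar> \<partial>M)\<^sup>2 \<le> (\<integral>\<^sup>+x. (ennreal \<bar>f x\<bar>) ^ 2 \<partial>M) * (\<integral>\<^sup>+x. (ennreal \<bar>g x\<bar>) ^ 2 \<partial>M)"
    by (rule Cauchy_Schwarz_nn_integral) auto
  have e1: "(\<integral>\<^sup>+x. ennreal \<bar>f x\<bar> * ennreal \<bar>g x\<bar> \<partial>M) = ennreal (\<integral>x. \<bar>f x * g x\<bar> \<partial>M)"
    using nn_integral_eq_integral[OF i1] by (simp add: ennreal_mult' abs_mult)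
  have e2: "(\<integral>\<^sup>+x. (ennreal \<bar>f x\<bar>) ^ 2 \<partial>M) = ennreal (\<integral>x. (f x)\<^sup>2 \<partial>M)"
    using nn_integral_eq_integral[OF i2] by (simp add: ennreal_power)
  have e3: "(\<integral>\<^sup>+x. (ennreal \<bar>g x\<bar>) ^ 2 \<partial>M) = ennreal (\<integral>x. (g x)\<^sup>2 \<partial>M)"
    using nn_integral_eq_integral[OF i3] by (simp add: ennreal_power)
  have p1: "0 \<le> (\<integral>x. (f x)\<^sup>2 \<partial>M)" "0 \<le> (\<integral>x. (g x)\<^sup>2 \<partial>M)" "0 \<le> (\<integral>x. \<bar>f x * g x\<bar> \<partial>M)"
    by auto
  have "(\<integral>x. \<bar>f x * g x\<bar> \<partial>M)\<^sup>2 \<le> (\<integral>x. (f x)\<^sup>2 \<partial>M) * (\<integral>x. (g x)\<^sup>2 \<partial>M)"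
    using CS unfolding e1 e2 e3 using p1
    by (simp add: ennreal_mult'[symmetric]) (metis ennreal_le_iff ennreal_power p1(3) zero_le_mult_iff zero_le_power2 p1)
  then have "sqrt ((\<integral>x. \<bar>f x * g x\<bar> \<partial>M)\<^sup>2) \<le> sqrt ((\<integral>x. (f x)\<^sup>2 \<partial>M) * (\<integral>x. (g x)\<^sup>2 \<partial>M))"
    using real_sqrt_le_mono by blast
  then show ?thesis using p1 by (simp add: real_sqrt_mult)
qed



locale kset =
  fixes tensor :: "'hx::{real_inner,banach,second_countable_topology} \<Rightarrow> 'hy::{real_inner,banach,second_countable_topology} \<Rightarrow> 'h::{real_inner,banach,second_countable_topology}"
    and K :: "'x::polish_space \<Rightarrow> 'hx" and L :: "'y::polish_space \<Rightarrow> 'hy" and BK BL :: real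
  assumes tens: "tensor_product tensor" and Km[measurable]: "K \<in> borel_measurable borel"
    and Lm[measurable]: "L \<in> borel_measurable borel"
    and Kb: "\<And>x. norm (K x) \<le> BK" and Lb: "\<And>y. norm (L y) \<le> BL"

context kset
begin

lemma BK0: "0 \<le> BK" using Kb[of undefined] norm_ge_zero order_trans by blast
lemma BL0: "0 \<le> BL" using Lb[of undefined] norm_ge_zero order_trans by blast

lemma mL_meas:
  assumes "valid_model P"
  shows "(\<lambda>x. integral\<^sup>L (mcond P a x) L) \<in> borel_measurable borel"
proof -
  have "mcond P a \<in> borel \<rightarrow>\<^sub>M subprob_algebra borel" using assms unfolding valid_model_def by auto
  from measurable_compose[OF this integral_measurable_subprob_algebra[OF Lm]] show ?thesis by simp
qed

lemma mL_int:
  assumes "valid_model P"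
  shows "integrable (mcond P a x) L"
proof -
  have V: "prob_space (mcond P a x)" "sets (mcond P a x) = sets borel"
    using assms unfolding valid_model_def by auto
  show ?thesis
    using finite_measure.integrable_const_bound[of "mcond P a x" L BL] V Lb
    measurable_cong_sets[OF V(2) refl, of borel] Lm by (auto simp: prob_space_def)
qed

lemma mL_bound:
  assumes "valid_model P"
  shows "norm (integral\<^sup>L (mcond P a x) L) \<le> BL"
proof -
  have V: "prob_space (mcond P a x)" using assms unfolding valid_model_def by auto
  have "norm (integral\<^sup>L (mcond P a x) L) \<le> (\<integral>y. norm (L y) \<partial>mcond P a x)" by simp
  also have "\<dots> \<le> BL"
    using prob_space.integral_le_const[OF V, of "\<lambda>y. norm (L y)" BL] mL_int[OF assms] Lb by auto
  finally show ?thesis .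
qed

lemma th_meas[measurable]:
  assumes "valid_model P"
  shows "theta tensor K L P a \<in> borel_measurable borel"
  unfolding theta_def
  by (rule borel_measurable_continuous_Pair[OF Km mL_meas[OF assms] tensor_cont[OF tens]])

lemma th_bound:
  assumes "valid_model P"
  shows "norm (theta tensor K L P a x) \<le> BK * BL"
  unfolding theta_def tensor_norm[OF tens]
  by (rule mult_mono[OF Kb mL_bound[OF assms] BK0 norm_ge_zero])

lemma th_if: "theta tensor K L P a x = (if a then theta tensor K L P True x else theta tensor K L P False x)"
  by (cases a) auto

lemma phi_alt: "phi tensor K L Q z =
   ((if fst (snd z) then 1 else 0) / mprop Q (fst z) - (if fst (snd z) then 0 else 1) / (1 - mprop Q (fst z)))
      *\<^sub>R (tensor (K (fst z)) (L (snd (snd z))) -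
           (if fst (snd z) then theta tensor K L Q True (fst z) else theta tensor K L Q False (fst z)))
   + theta tensor K L Q True (fst z) - theta tensor K L Q False (fst z) - psi tensor K L Q"
  by (cases z; cases "fst (snd z)") (auto simp: phi_def)

lemma phi_meas:
  assumes Q: "valid_model Q"
  shows "phi tensor K L Q \<in> borel_measurable Zspace"
proof -
  have [measurable]: "mprop Q \<in> borel_measurable borel" using Q unfolding valid_model_def by auto
  have [measurable]: "theta tensor K L Q a \<in> borel_measurable borel" for a using th_meas[OF Q] .
  have [measurable]: "(\<lambda>z. tensor (K (fst z)) (L (snd (snd z)))) \<in> borel_measurable (Zspace :: ('x \<times> bool \<times> 'y) measure)"
    by (rule borel_measurable_continuous_Pair[OF _ _ tensor_cont[OF tens]]) (unfold Zspace_def; measurable)+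
  have [measurable]: "(\<lambda>z. fst z) \<in> (Zspace :: ('x \<times> bool \<times> 'y) measure) \<rightarrow>\<^sub>M borel"
     "Measurable.pred (Zspace :: ('x \<times> bool \<times> 'y) measure) (\<lambda>z. fst (snd z))"
    unfolding Zspace_def by measurable
  show ?thesis unfolding phi_alt[abs_def] by measurable
qed

lemma W_bound:
  assumes "strong_positivity \<eta> Q" "\<eta> > 0"
  shows "\<bar>(if a then 1 else 0) / mprop Q x - (if a then 0 else 1) / (1 - mprop Q x)\<bar> \<le> 1 / \<eta>"
proof -
  have q0: "\<eta> \<le> mprop Q x \<and> mprop Q x \<le> 1 - \<eta>" using assms(1) unfolding strong_positivity_def by auto
  then have q: "\<eta> \<le> mprop Q x" "\<eta> \<le> 1 - mprop Q x" by linarith+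
  show ?thesis
    using q assms(2) by (cases a) (auto simp: divide_simps)
qed

lemma phi_bound:
  assumes Q: "valid_model Q" and sp: "strong_positivity \<eta> Q" and eta: "\<eta> > 0"
  shows "norm (phi tensor K L Q z) \<le> (1/\<eta>) * (2 * (BK * BL)) + 2 * (BK * BL) + norm (psi tensor K L Q)"
proof -
  obtain x a y where z: "z = (x, a, y)" by (cases z) auto
  define w where "w = (if a then 1 else 0) / mprop Q x - (if a then 0 else 1) / (1 - mprop Q x)"
  have w: "\<bar>w\<bar> \<le> 1/\<eta>" unfolding w_def by (rule W_bound[OF sp eta])
  have t1: "norm (tensor (K x) (L y)) \<le> BK * BL"
    unfolding tensor_norm[OF tens] by (rule mult_mono[OF Kb Lb BK0 norm_ge_zero])
  have t2: "norm (theta tensor K L Q a' x) \<le> BK * BL" for a' by (rule th_bound[OF Q])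
  have d: "norm (tensor (K x) (L y) - theta tensor K L Q a x) \<le> 2 * (BK * BL)"
    using norm_triangle_ineq4[of "tensor (K x) (L y)" "theta tensor K L Q a x"] t1 t2[of a] by linarith
  have s: "norm (w *\<^sub>R (tensor (K x) (L y) - theta tensor K L Q a x)) \<le> (1/\<eta>) * (2 * (BK * BL))"
    unfolding norm_scaleR by (rule mult_mono[OF w d]) (use eta in auto)
  have "phi tensor K L Q z = w *\<^sub>R (tensor (K x) (L y) - theta tensor K L Q a x)
       + (theta tensor K L Q True x - theta tensor K L Q False x) - psi tensor K L Q"
    unfolding z phi_def w_def by (simp add: algebra_simps)
  also have "norm \<dots> \<le> (1/\<eta>) * (2 * (BK * BL)) + 2 * (BK * BL) + norm (psi tensor K L Q)"
  proof -
    have "norm (theta tensor K L Q True x - theta tensor K L Q False x) \<le> 2 * (BK * BL)"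
      using norm_triangle_ineq4[of "theta tensor K L Q True x" "theta tensor K L Q False x"] t2[of True] t2[of False] by linarith
    then show ?thesis using s norm_triangle_ineq4 norm_triangle_ineq
      by (smt (verit, best))
  qed
  finally show ?thesis .
qed

end



context kset
begin

lemma dist_props:
  assumes P: "valid_model P"
  shows "prob_space (dist P)" "sets (dist P) = sets Zspace"
proof -
  have A: "mX P \<in> space (prob_algebra borel)"
    using P unfolding valid_model_def by (simp add: space_prob_algebra)
  show "prob_space (dist P)" unfolding dist_kern by (rule prob_space_bind'[OF A kern_meas[OF P]])
  show "sets (dist P) = sets Zspace" unfolding dist_kern by (rule sets_bind'[OF A kern_meas[OF P]])
qed

lemma y_integral:
  assumes P: "valid_model P" and Q: "valid_model Q"
  shows "(\<integral>y. inner (phi tensor K L Q (x, a, y)) e \<partial>mcond P a x) =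
     ((if a then 1 else 0) / mprop Q x - (if a then 0 else 1) / (1 - mprop Q x)) *
        (inner (theta tensor K L P a x) e - inner (theta tensor K L Q a x) e)
     + inner (theta tensor K L Q True x - theta tensor K L Q False x - psi tensor K L Q) e"
proof -
  define w where "w = (if a then 1 else 0) / mprop Q x - (if a then 0 else 1) / (1 - mprop Q x)"
  define c where "c = inner (theta tensor K L Q True x - theta tensor K L Q False x - psi tensor K L Q) e"
  define T where "T v = inner (tensor (K x) v) e" for v
  have T: "bounded_linear T" unfolding T_def
    by (rule bounded_linear_compose[OF bounded_linear_inner_left bounded_bilinear.bounded_linear_right[OF tensor_bb[OF tens]]])
  have V: "prob_space (mcond P a x)" using P unfolding valid_model_def by auto
  have iL: "integrable (mcond P a x) L" by (rule mL_int[OF P])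
  have iT: "integrable (mcond P a x) (\<lambda>y. T (L y))" by (rule integrable_bounded_linear[OF T iL])
  have eq: "inner (phi tensor K L Q (x, a, y)) e = w * (T (L y) - inner (theta tensor K L Q a x) e) + c" for y
    unfolding phi_def w_def c_def T_def by (simp add: inner_add_left inner_diff_left algebra_simps)
  have "(\<integral>y. inner (phi tensor K L Q (x, a, y)) e \<partial>mcond P a x)
      = (\<integral>y. w * (T (L y) - inner (theta tensor K L Q a x) e) + c \<partial>mcond P a x)"
    unfolding eq ..
  also have "\<dots> = w * ((\<integral>y. T (L y) \<partial>mcond P a x) - inner (theta tensor K L Q a x) e) + c"
  proof -
    have ic: "integrable (mcond P a x) (\<lambda>y. r)" for r :: real
      using V by (simp add: prob_space_def finite_measure.integrable_const)
    have i1: "integrable (mcond P a x) (\<lambda>y. T (L y) - inner (theta tensor K L Q a x) e)"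
      by (intro Bochner_Integration.integrable_diff iT ic)
    have i2: "integrable (mcond P a x) (\<lambda>y. w * (T (L y) - inner (theta tensor K L Q a x) e))"
      by (intro integrable_mult_right i1)
    have "(\<integral>y. w * (T (L y) - inner (theta tensor K L Q a x) e) + c \<partial>mcond P a x)
        = (\<integral>y. w * (T (L y) - inner (theta tensor K L Q a x) e) \<partial>mcond P a x) + (\<integral>y. c \<partial>mcond P a x)"
      by (rule Bochner_Integration.integral_add[OF i2 ic])
    also have "(\<integral>y. c \<partial>mcond P a x) = c" using V by (simp add: prob_space.prob_space)
    also have "(\<integral>y. w * (T (L y) - inner (theta tensor K L Q a x) e) \<partial>mcond P a x)
        = w * (\<integral>y. (T (L y) - inner (theta tensor K L Q a x) e) \<partial>mcond P a x)" by simp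
    also have "(\<integral>y. (T (L y) - inner (theta tensor K L Q a x) e) \<partial>mcond P a x)
        = (\<integral>y. T (L y) \<partial>mcond P a x) - (\<integral>y. inner (theta tensor K L Q a x) e \<partial>mcond P a x)"
      by (rule Bochner_Integration.integral_diff[OF iT ic])
    also have "(\<integral>y. inner (theta tensor K L Q a x) e \<partial>mcond P a x) = inner (theta tensor K L Q a x) e"
      using V by (simp add: prob_space.prob_space)
    finally show ?thesis .
  qed
  also have "(\<integral>y. T (L y) \<partial>mcond P a x) = inner (theta tensor K L P a x) e"
    unfolding integral_bounded_linear[OF T iL] unfolding T_def theta_def ..
  finally show ?thesis unfolding w_def c_def .
qed

end



context kset
begin

lemma inner_R:
  assumes P: "valid_model P" and Q: "valid_model Q" and sp: "strong_positivity \<eta> Q" and eta: "\<eta> > 0"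
  shows "inner (remainder tensor K L P Q) e =
    (\<integral>x. (mprop P x - mprop Q x) *
        (inner (theta tensor K L P True x - theta tensor K L Q True x) e / mprop Q x
       + inner (theta tensor K L P False x - theta tensor K L Q False x) e / (1 - mprop Q x)) \<partial>mX P)"
proof -
  have VP: "prob_space (mX P)" "sets (mX P) = sets borel" "\<And>x. 0 \<le> mprop P x \<and> mprop P x \<le> 1"
    and mP[measurable]: "mprop P \<in> borel_measurable borel"
    using P unfolding valid_model_def by auto
  have mQ[measurable]: "mprop Q \<in> borel_measurable borel" using Q unfolding valid_model_def by auto
  have FM: "finite_measure (mX P)" using VP(1) prob_space_def by blast
  have q0: "\<eta> \<le> mprop Q x \<and> mprop Q x \<le> 1 - \<eta>" for x using sp unfolding strong_positivity_def by auto
  have q1: "\<eta> \<le> mprop Q x" "\<eta> \<le> 1 - mprop Q x" for x using q0[of x] by linarith+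
  have MC: "f \<in> borel_measurable (mX P)" if "f \<in> borel_measurable borel" for f :: "'x \<Rightarrow> real"
    using that by (simp add: measurable_cong_sets[OF VP(2) refl])
  have MCh: "f \<in> borel_measurable (mX P)" if "f \<in> borel_measurable borel" for f :: "'x \<Rightarrow> 'h"
    using that by (simp add: measurable_cong_sets[OF VP(2) refl])
  note thm1[measurable] = th_meas[OF P] th_meas[OF Q]
  define C where "C = BK * BL * norm e"
  have C0: "0 \<le> C" unfolding C_def using BK0 BL0 by simp
  have ib: "\<bar>inner (theta tensor K L R a x) e\<bar> \<le> C" if "valid_model R" for R a x
  proof -
    have "\<bar>inner (theta tensor K L R a x) e\<bar> \<le> norm (theta tensor K L R a x) * norm e"
      by (rule Cauchy_Schwarz_ineq2)
    also have "\<dots> \<le> BK * BL * norm e" by (rule mult_right_mono[OF th_bound[OF that] norm_ge_zero])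
    finally show ?thesis unfolding C_def .
  qed
  define D where "D a x = inner (theta tensor K L P a x - theta tensor K L Q a x) e" for a x
  have Db: "\<bar>D a x\<bar> \<le> 2 * C" for a x
    using ib[OF P, of a x] ib[OF Q, of a x] unfolding D_def inner_diff_left by linarith
  define Tg where "Tg x = (mprop P x - mprop Q x) * (D True x / mprop Q x + D False x / (1 - mprop Q x))" for x
  define G2 where "G2 x = inner (theta tensor K L P True x - theta tensor K L P False x) e" for x
  define s where "s = inner (psi tensor K L Q) e"
  have Tg_b: "\<bar>Tg x\<bar> \<le> 4 * C / \<eta>" for x
  proof -
    have a1: "\<bar>mprop P x - mprop Q x\<bar> \<le> 1" using VP(3)[of x] q0[of x] eta by auto
    have a2: "\<bar>D a x / r\<bar> \<le> 2 * C / \<eta>" if "\<eta> \<le> r" for a r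
    proof -
      have "\<bar>D a x / r\<bar> = \<bar>D a x\<bar> / r" using that eta by (simp add: abs_div)
      also have "\<dots> \<le> 2 * C / \<eta>" by (rule frac_le) (use Db[of a x] that eta C0 in auto)
      finally show ?thesis .
    qed
    have a3: "\<bar>D True x / mprop Q x + D False x / (1 - mprop Q x)\<bar> \<le> 4 * C / \<eta>"
      using a2[OF q1(1)[of x], of True] a2[OF q1(2)[of x], of False] by (simp add: abs_triangle_ineq order_trans[OF abs_triangle_ineq])
    have "\<bar>Tg x\<bar> = \<bar>mprop P x - mprop Q x\<bar> * \<bar>D True x / mprop Q x + D False x / (1 - mprop Q x)\<bar>"
      unfolding Tg_def abs_mult ..
    also have "\<dots> \<le> 1 * (4 * C / \<eta>)" by (rule mult_mono[OF a1 a3]) auto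
    finally show ?thesis by simp
  qed
  have Tg_m: "Tg \<in> borel_measurable borel" unfolding Tg_def D_def by measurable
  have iTg: "integrable (mX P) Tg" by (rule bint[OF FM MC[OF Tg_m] Tg_b])
  have G2_m: "G2 \<in> borel_measurable borel" unfolding G2_def by measurable
  have G2_b: "\<bar>G2 x\<bar> \<le> 2 * C" for x
    using ib[OF P, of True x] ib[OF P, of False x] unfolding G2_def inner_diff_left by linarith
  have iG2: "integrable (mX P) G2" by (rule bint[OF FM MC[OF G2_m] G2_b])
  have ic: "integrable (mX P) (\<lambda>x. r)" for r :: real
    using FM by (simp add: finite_measure.integrable_const)
  have ith: "integrable (mX P) (\<lambda>x. theta tensor K L P True x - theta tensor K L P False x)"
  proof (rule finite_measure.integrable_const_bound[OF FM, where B="2 * (BK * BL)"])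
    show "AE x in mX P. norm (theta tensor K L P True x - theta tensor K L P False x) \<le> 2 * (BK * BL)"
      using th_bound[OF P, of True] th_bound[OF P, of False]
      by (intro AE_I2) (smt (verit, best) norm_triangle_ineq4)
    show "(\<lambda>x. theta tensor K L P True x - theta tensor K L P False x) \<in> borel_measurable (mX P)"
      by (rule MCh) measurable
  qed
  have psiP: "inner (psi tensor K L P) e = integral\<^sup>L (mX P) G2"
    unfolding psi_def G2_def using ith by simp
  have DP: "prob_space (dist P)" "sets (dist P) = sets Zspace" using dist_props[OF P] by auto
  define Bp where "Bp = (1/\<eta>) * (2 * (BK * BL)) + 2 * (BK * BL) + norm (psi tensor K L Q)"
  have iphi: "integrable (dist P) (phi tensor K L Q)"
  proof (rule finite_measure.integrable_const_bound[where B=Bp])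
    show "finite_measure (dist P)" using DP(1) prob_space_def by blast
    show "AE x in dist P. norm (phi tensor K L Q x) \<le> Bp"
      unfolding Bp_def using phi_bound[OF Q sp eta] by simp
    show "phi tensor K L Q \<in> borel_measurable (dist P)"
      using phi_meas[OF Q] by (simp add: measurable_cong_sets[OF DP(2) refl])
  qed
  have s1: "inner (integral\<^sup>L (dist P) (phi tensor K L Q)) e = (\<integral>z. inner (phi tensor K L Q z) e \<partial>dist P)"
    using iphi by simp
  have s2: "(\<integral>z. inner (phi tensor K L Q z) e \<partial>dist P) =
      (\<integral>x. mprop P x * (\<integral>y. inner (phi tensor K L Q (x, True, y)) e \<partial>mcond P True x)
         + (1 - mprop P x) * (\<integral>y. inner (phi tensor K L Q (x, False, y)) e \<partial>mcond P False x) \<partial>mX P)"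
  proof (rule integral_dist[OF P, where B="Bp * norm e"])
    show "(\<lambda>z. inner (phi tensor K L Q z) e) \<in> borel_measurable Zspace"
      using phi_meas[OF Q] by measurable
    fix z
    show "\<bar>inner (phi tensor K L Q z) e\<bar> \<le> Bp * norm e"
      using Cauchy_Schwarz_ineq2[of "phi tensor K L Q z" e] mult_right_mono[OF phi_bound[OF Q sp eta, of z] norm_ge_zero, of e]
      unfolding Bp_def by linarith
  qed
  have pw: "mprop P x * (\<integral>y. inner (phi tensor K L Q (x, True, y)) e \<partial>mcond P True x)
         + (1 - mprop P x) * (\<integral>y. inner (phi tensor K L Q (x, False, y)) e \<partial>mcond P False x)
       = Tg x + G2 x - s" for x
  proof -
    have n1: "mprop Q x \<noteq> 0" "1 - mprop Q x \<noteq> 0" using q1[of x] eta by auto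
    show ?thesis
      unfolding y_integral[OF P Q] Tg_def G2_def s_def D_def
      using n1 by (simp add: inner_diff_left field_simps) (simp add: algebra_simps)
  qed
  have s3: "(\<integral>x. Tg x + G2 x - s \<partial>mX P) = integral\<^sup>L (mX P) Tg + integral\<^sup>L (mX P) G2 - s"
  proof -
    have "(\<integral>x. Tg x + G2 x - s \<partial>mX P) = (\<integral>x. Tg x + G2 x \<partial>mX P) - (\<integral>x. s \<partial>mX P)"
      by (rule Bochner_Integration.integral_diff[OF Bochner_Integration.integrable_add[OF iTg iG2] ic])
    also have "(\<integral>x. Tg x + G2 x \<partial>mX P) = integral\<^sup>L (mX P) Tg + integral\<^sup>L (mX P) G2"
      by (rule Bochner_Integration.integral_add[OF iTg iG2])
    also have "(\<integral>x. s \<partial>mX P) = s" using VP(1) by (simp add: prob_space.prob_space)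
    finally show ?thesis .
  qed
  have "inner (remainder tensor K L P Q) e = s + inner (integral\<^sup>L (dist P) (phi tensor K L Q)) e - inner (psi tensor K L P) e"
    unfolding remainder_def s_def by (simp add: inner_add_left inner_diff_left)
  also have "\<dots> = integral\<^sup>L (mX P) Tg"
    unfolding s1 s2 pw s3 psiP by simp
  finally show ?thesis unfolding Tg_def D_def .
qed

end



context kset
begin

lemma R_bound:
  assumes P: "valid_model P" and Q: "valid_model Q" and sp: "strong_positivity \<eta> Q" and eta: "\<eta> > 0"
  shows "norm (remainder tensor K L P Q) \<le> (1/\<eta>) * L2_dist_prop P Q *
           (L2_dist_theta tensor K L P Q True + L2_dist_theta tensor K L P Q False)"
proof (cases "remainder tensor K L P Q = 0")
  case True
  then show ?thesis using eta unfolding L2_dist_prop_def L2_dist_theta_def by simp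
next
  case False
  define R where "R = remainder tensor K L P Q"
  define e where "e = (1 / norm R) *\<^sub>R R"
  have ne: "norm e = 1" using False unfolding e_def R_def by simp
  have Re: "inner R e = norm R" using False unfolding e_def R_def
    by (simp add: power2_norm_eq_inner[symmetric] power2_eq_square)
  have VP: "prob_space (mX P)" "sets (mX P) = sets borel" "\<And>x. 0 \<le> mprop P x \<and> mprop P x \<le> 1"
    and mP[measurable]: "mprop P \<in> borel_measurable borel"
    using P unfolding valid_model_def by auto
  have mQ[measurable]: "mprop Q \<in> borel_measurable borel" using Q unfolding valid_model_def by auto
  have FM: "finite_measure (mX P)" using VP(1) prob_space_def by blast
  have q0: "\<eta> \<le> mprop Q x \<and> mprop Q x \<le> 1 - \<eta>" for x using sp unfolding strong_positivity_def by auto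
  have q1: "\<eta> \<le> mprop Q x" "\<eta> \<le> 1 - mprop Q x" for x using q0[of x] by linarith+
  have MC: "f \<in> borel_measurable (mX P)" if "f \<in> borel_measurable borel" for f :: "'x \<Rightarrow> real"
    using that by (simp add: measurable_cong_sets[OF VP(2) refl])
  note thm1[measurable] = th_meas[OF P] th_meas[OF Q]
  define D where "D a x = inner (theta tensor K L P a x - theta tensor K L Q a x) e" for a x
  define N where "N a x = norm (theta tensor K L Q a x - theta tensor K L P a x)" for a x
  define Tg where "Tg x = (mprop P x - mprop Q x) * (D True x / mprop Q x + D False x / (1 - mprop Q x))" for x
  define f where "f a x = \<bar>(mprop Q x - mprop P x) * N a x\<bar>" for a x
  have DN: "\<bar>D a x\<bar> \<le> N a x" for a x
    using Cauchy_Schwarz_ineq2[of "theta tensor K L P a x - theta tensor K L Q a x" e] ne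
    unfolding D_def N_def by (simp add: norm_minus_commute)
  have Nb: "N a x \<le> 2 * (BK * BL)" for a x
    using th_bound[OF P, of a x] th_bound[OF Q, of a x] norm_triangle_ineq4[of "theta tensor K L Q a x" "theta tensor K L P a x"]
    unfolding N_def by linarith
  have pb: "\<bar>mprop Q x - mprop P x\<bar> \<le> 1" for x using VP(3)[of x] q0[of x] eta by auto
  have fb: "\<bar>f a x\<bar> \<le> 2 * (BK * BL)" for a x
  proof -
    have "\<bar>f a x\<bar> = \<bar>mprop Q x - mprop P x\<bar> * N a x" unfolding f_def N_def by (simp add: abs_mult)
    also have "\<dots> \<le> 1 * (2 * (BK * BL))" by (rule mult_mono[OF pb Nb]) (auto simp: N_def)
    finally show ?thesis by simp
  qed
  have f_m: "f a \<in> borel_measurable borel" for a unfolding f_def N_def by measurable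
  have Tg_m: "Tg \<in> borel_measurable borel" unfolding Tg_def D_def by measurable
  have pt: "\<bar>Tg x\<bar> \<le> (1/\<eta>) * (f True x + f False x)" for x
  proof -
    have a2: "\<bar>D a x / r\<bar> \<le> N a x / \<eta>" if "\<eta> \<le> r" for a r
    proof -
      have "\<bar>D a x / r\<bar> = \<bar>D a x\<bar> / r" using that eta by (simp add: abs_div)
      also have "\<dots> \<le> N a x / \<eta>" by (rule frac_le) (use DN[of a x] that eta in \<open>auto simp: N_def\<close>)
      finally show ?thesis .
    qed
    have a3: "\<bar>D True x / mprop Q x + D False x / (1 - mprop Q x)\<bar> \<le> N True x / \<eta> + N False x / \<eta>"
      using a2[OF q1(1)[of x], of True] a2[OF q1(2)[of x], of False] abs_triangle_ineq
      by (smt (verit))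
    have "\<bar>Tg x\<bar> = \<bar>mprop Q x - mprop P x\<bar> * \<bar>D True x / mprop Q x + D False x / (1 - mprop Q x)\<bar>"
      unfolding Tg_def abs_mult by (simp add: abs_minus_commute)
    also have "\<dots> \<le> \<bar>mprop Q x - mprop P x\<bar> * (N True x / \<eta> + N False x / \<eta>)"
      by (rule mult_left_mono[OF a3]) simp
    also have "\<dots> = (1/\<eta>) * (f True x + f False x)"
    proof -
      have fa: "f a x = \<bar>mprop Q x - mprop P x\<bar> * N a x" for a
        unfolding f_def abs_mult N_def by simp
      show ?thesis unfolding fa by (simp add: ring_distribs)
    qed
    finally show ?thesis .
  qed
  have iTg: "integrable (mX P) (\<lambda>x. \<bar>Tg x\<bar>)"
  proof (rule bint[OF FM, where B="(1/\<eta>) * (2 * (BK * BL) + 2 * (BK * BL))"])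
    show "(\<lambda>x. \<bar>Tg x\<bar>) \<in> borel_measurable (mX P)" using MC[OF Tg_m] by simp
    fix x
    have "(1/\<eta>) * (f True x + f False x) \<le> (1/\<eta>) * (2 * (BK * BL) + 2 * (BK * BL))"
      using eta abs_le_D1[OF fb[of True x]] abs_le_D1[OF fb[of False x]] by (intro mult_left_mono add_mono) auto
    then show "\<bar>\<bar>Tg x\<bar>\<bar> \<le> (1/\<eta>) * (2 * (BK * BL) + 2 * (BK * BL))" using pt[of x] by simp
  qed
  have if_: "integrable (mX P) (f a)" for a by (rule bint[OF FM MC[OF f_m] fb])
  have "norm R = inner R e" using Re by simp
  also have "\<dots> = integral\<^sup>L (mX P) Tg" unfolding R_def inner_R[OF P Q sp eta] Tg_def D_def ..
  also have "\<dots> \<le> (\<integral>x. \<bar>Tg x\<bar> \<partial>mX P)"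
    using integral_norm_bound[of "mX P" Tg] abs_ge_self[of "integral\<^sup>L (mX P) Tg"] unfolding real_norm_def by linarith
  also have "\<dots> \<le> (\<integral>x. (1/\<eta>) * (f True x + f False x) \<partial>mX P)"
    by (rule integral_mono[OF iTg _ pt]) (intro integrable_mult_right Bochner_Integration.integrable_add if_)
  also have "\<dots> = (1/\<eta>) * (integral\<^sup>L (mX P) (f True) + integral\<^sup>L (mX P) (f False))"
    using if_ by simp
  also have "integral\<^sup>L (mX P) (f a) \<le> L2_dist_prop P Q * L2_dist_theta tensor K L P Q a" for a
  proof -
    have "integral\<^sup>L (mX P) (f a) \<le> sqrt (\<integral>x. (mprop Q x - mprop P x)\<^sup>2 \<partial>mX P) * sqrt (\<integral>x. (N a x)\<^sup>2 \<partial>mX P)"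
      unfolding f_def
      by (rule CS_real[OF FM, where Bf=1 and Bg="2 * (BK * BL)"])
         (use pb Nb in \<open>auto simp: N_def intro!: MC\<close>)
    then show ?thesis unfolding L2_dist_prop_def L2_dist_theta_def N_def .
  qed
  then have "(1/\<eta>) * (integral\<^sup>L (mX P) (f True) + integral\<^sup>L (mX P) (f False))
      \<le> (1/\<eta>) * (L2_dist_prop P Q * L2_dist_theta tensor K L P Q True + L2_dist_prop P Q * L2_dist_theta tensor K L P Q False)"
    using eta by (intro mult_left_mono add_mono) auto
  finally show ?thesis unfolding R_def by (simp add: algebra_simps)
qed

end



lemma inter_ge:
  assumes "prob_space M" "A \<in> sets M" "B \<in> sets M"
  shows "measure M (A \<inter> B) \<ge> measure M A + measure M B - 1"
proof -
  have fm: "finite_measure M" using assms(1) prob_space_def by blast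
  have "measure M (A \<union> B) = measure M A + measure M B - measure M (A \<inter> B)"
    using assms(2,3) by (intro measure_Un3) (auto simp: finite_measure.fmeasurable_eq_sets[OF fm])
  moreover have "measure M (A \<union> B) \<le> 1" using prob_space.prob_le_1[OF assms(1)] by blast
  ultimately show ?thesis by linarith
qed

lemma bigOp_combine:
  fixes X A B C :: "nat \<Rightarrow> 'w \<Rightarrow> real"
  assumes M: "prob_space M" and c: "0 \<le> c"
    and hA: "bigOp M A (\<lambda>n. real n powr (- ta))"
    and hB: "bigOp M B (\<lambda>n. real n powr (- g1))"
    and hC: "bigOp M C (\<lambda>n. real n powr (- g0))"
    and Xb: "\<And>n \<omega>. \<omega> \<in> space M \<Longrightarrow> \<bar>X n \<omega>\<bar> \<le> c * A n \<omega> * (B n \<omega> + C n \<omega>)"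
    and A0: "\<And>n \<omega>. \<omega> \<in> space M \<Longrightarrow> 0 \<le> A n \<omega>"
    and B0: "\<And>n \<omega>. \<omega> \<in> space M \<Longrightarrow> 0 \<le> B n \<omega>"
    and C0: "\<And>n \<omega>. \<omega> \<in> space M \<Longrightarrow> 0 \<le> C n \<omega>"
  shows "bigOp M X (\<lambda>n. real n powr (- (ta + min g1 g0)))"
  unfolding bigOp_def
proof (intro allI impI)
  fix \<epsilon> :: real assume e: "\<epsilon> > 0"
  obtain CA NA where hA': "\<And>n. n \<ge> NA \<Longrightarrow> \<exists>E\<in>sets M. measure M E \<ge> 1 - \<epsilon>/3 \<and> (\<forall>\<omega>\<in>E. \<bar>A n \<omega>\<bar> \<le> CA * real n powr (- ta))"
    using hA e unfolding bigOp_def by (meson divide_pos_pos zero_less_numeral)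
  obtain CB NB where hB': "\<And>n. n \<ge> NB \<Longrightarrow> \<exists>E\<in>sets M. measure M E \<ge> 1 - \<epsilon>/3 \<and> (\<forall>\<omega>\<in>E. \<bar>B n \<omega>\<bar> \<le> CB * real n powr (- g1))"
    using hB e unfolding bigOp_def by (meson divide_pos_pos zero_less_numeral)
  obtain CC NC where hC': "\<And>n. n \<ge> NC \<Longrightarrow> \<exists>E\<in>sets M. measure M E \<ge> 1 - \<epsilon>/3 \<and> (\<forall>\<omega>\<in>E. \<bar>C n \<omega>\<bar> \<le> CC * real n powr (- g0))"
    using hC e unfolding bigOp_def by (meson divide_pos_pos zero_less_numeral)
  define m where "m = min g1 g0"
  define K where "K = c * max CA 0 * (max CB 0 + max CC 0)"
  define N where "N = max (max NA NB) (max NC 1)"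
  show "\<exists>K N. \<forall>n\<ge>N. \<exists>E\<in>sets M. 1 - \<epsilon> \<le> measure M E \<and> (\<forall>\<omega>\<in>E. \<bar>X n \<omega>\<bar> \<le> K * real n powr (- (ta + min g1 g0)))"
  proof (intro exI[of _ K] exI[of _ N] allI impI)
    fix n assume n: "N \<le> n"
    obtain EA where EA: "EA \<in> sets M" "measure M EA \<ge> 1 - \<epsilon>/3" "\<forall>\<omega>\<in>EA. \<bar>A n \<omega>\<bar> \<le> CA * real n powr (- ta)"
      using hA'[of n] n unfolding N_def by auto
    obtain EB where EB: "EB \<in> sets M" "measure M EB \<ge> 1 - \<epsilon>/3" "\<forall>\<omega>\<in>EB. \<bar>B n \<omega>\<bar> \<le> CB * real n powr (- g1)"
      using hB'[of n] n unfolding N_def by auto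
    obtain EC where EC: "EC \<in> sets M" "measure M EC \<ge> 1 - \<epsilon>/3" "\<forall>\<omega>\<in>EC. \<bar>C n \<omega>\<bar> \<le> CC * real n powr (- g0)"
      using hC'[of n] n unfolding N_def by auto
    have n1: "1 \<le> real n" using n unfolding N_def by auto
    define E where "E = EA \<inter> EB \<inter> EC"
    have Es: "E \<in> sets M" unfolding E_def using EA EB EC by auto
    have "measure M E \<ge> measure M (EA \<inter> EB) + measure M EC - 1"
      unfolding E_def by (rule inter_ge[OF M]) (use EA EB EC in auto)
    moreover have "measure M (EA \<inter> EB) \<ge> measure M EA + measure M EB - 1"
      by (rule inter_ge[OF M EA(1) EB(1)])
    ultimately have Em: "1 - \<epsilon> \<le> measure M E" using EA(2) EB(2) EC(2) by linarith
    have "\<bar>X n \<omega>\<bar> \<le> K * real n powr (- (ta + min g1 g0))" if w: "\<omega> \<in> E" for \<omega>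
    proof -
      have wM: "\<omega> \<in> space M" using w Es sets.sets_into_space by blast
      have rA: "A n \<omega> \<le> max CA 0 * real n powr (- ta)"
        using EA(3) w unfolding E_def
        by (smt (verit, best) IntD1 mult_right_mono powr_ge_zero)
      have rB: "B n \<omega> \<le> max CB 0 * real n powr (- m)"
      proof -
        have "B n \<omega> \<le> max CB 0 * real n powr (- g1)"
          using EB(3) w unfolding E_def by (smt (verit, best) IntD1 IntD2 mult_right_mono powr_ge_zero)
        also have "\<dots> \<le> max CB 0 * real n powr (- m)"
          by (intro mult_left_mono powr_mono n1) (auto simp: m_def)
        finally show ?thesis .
      qed
      have rC: "C n \<omega> \<le> max CC 0 * real n powr (- m)"
      proof -
        have "C n \<omega> \<le> max CC 0 * real n powr (- g0)"
          using EC(3) w unfolding E_def by (smt (verit, best) IntD2 mult_right_mono powr_ge_zero)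
        also have "\<dots> \<le> max CC 0 * real n powr (- m)"
          by (intro mult_left_mono powr_mono n1) (auto simp: m_def)
        finally show ?thesis .
      qed
      have "\<bar>X n \<omega>\<bar> \<le> c * A n \<omega> * (B n \<omega> + C n \<omega>)" by (rule Xb[OF wM])
      also have "\<dots> \<le> c * (max CA 0 * real n powr (- ta)) * (max CB 0 * real n powr (- m) + max CC 0 * real n powr (- m))"
        by (intro mult_mono mult_left_mono add_mono rA rB rC c A0[OF wM] B0[OF wM] C0[OF wM] add_nonneg_nonneg mult_nonneg_nonneg) auto
      also have "\<dots> = K * (real n powr (- ta) * real n powr (- m))"
        unfolding K_def by (simp add: algebra_simps)
      also have "real n powr (- ta) * real n powr (- m) = real n powr (- (ta + min g1 g0))"
        unfolding m_def by (simp add: powr_add[symmetric])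
      finally show ?thesis .
    qed
    then show "\<exists>E\<in>sets M. 1 - \<epsilon> \<le> measure M E \<and> (\<forall>\<omega>\<in>E. \<bar>X n \<omega>\<bar> \<le> K * real n powr (- (ta + min g1 g0)))"
      using Es Em by blast
  qed
qed

lemma bigOp_littleOp:
  fixes X :: "nat \<Rightarrow> 'w \<Rightarrow> real"
  assumes h: "bigOp M X (\<lambda>n. real n powr (- s))" and s: "s > 1/2"
  shows "littleOp M X (\<lambda>n. real n powr (- 1/2))"
  unfolding littleOp_def
proof (intro allI impI)
  fix \<delta> \<epsilon> :: real assume d: "\<delta> > 0" and e: "\<epsilon> > 0"
  obtain C N where hC: "\<And>n. n \<ge> N \<Longrightarrow> \<exists>E\<in>sets M. measure M E \<ge> 1 - \<epsilon> \<and> (\<forall>\<omega>\<in>E. \<bar>X n \<omega>\<bar> \<le> C * real n powr (- s))"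
    using h e unfolding bigOp_def by meson
  define C' where "C' = max C 0"
  have "((\<lambda>n. real n powr (- (s - 1/2))) \<longlongrightarrow> 0) sequentially"
    by (rule tendsto_neg_powr) (use s filterlim_real_sequentially in auto)
  then have "((\<lambda>n. C' * real n powr (- (s - 1/2))) \<longlongrightarrow> C' * 0) sequentially"
    by (intro tendsto_mult tendsto_const)
  then have "eventually (\<lambda>n. C' * real n powr (- (s - 1/2)) < \<delta>) sequentially"
    using d by (intro order_tendstoD(2)) auto
  then obtain N2 where N2: "\<And>n. n \<ge> N2 \<Longrightarrow> C' * real n powr (- (s - 1/2)) < \<delta>"
    unfolding eventually_sequentially by blast
  show "\<exists>N. \<forall>n\<ge>N. \<exists>E\<in>sets M. 1 - \<epsilon> \<le> measure M E \<and> (\<forall>\<omega>\<in>E. \<bar>X n \<omega>\<bar> \<le> \<delta> * real n powr (- 1/2))"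
  proof (intro exI[of _ "max N N2"] allI impI)
    fix n assume n: "max N N2 \<le> n"
    obtain E where E: "E \<in> sets M" "measure M E \<ge> 1 - \<epsilon>" "\<forall>\<omega>\<in>E. \<bar>X n \<omega>\<bar> \<le> C * real n powr (- s)"
      using hC[of n] n by auto
    have "\<bar>X n \<omega>\<bar> \<le> \<delta> * real n powr (- 1/2)" if w: "\<omega> \<in> E" for \<omega>
    proof -
      have "\<bar>X n \<omega>\<bar> \<le> C' * real n powr (- s)"
        using E(3) w unfolding C'_def by (smt (verit, best) mult_right_mono powr_ge_zero)
      also have "real n powr (- s) = real n powr (- (s - 1/2)) * real n powr (- 1/2)"
        by (simp add: powr_add[symmetric])
      also have "C' * (real n powr (- (s - 1/2)) * real n powr (- 1/2)) = (C' * real n powr (- (s - 1/2))) * real n powr (- 1/2)"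
        by simp
      also have "\<dots> \<le> \<delta> * real n powr (- 1/2)"
        using N2[of n] n by (intro mult_right_mono) auto
      finally show ?thesis .
    qed
    then show "\<exists>E\<in>sets M. 1 - \<epsilon> \<le> measure M E \<and> (\<forall>\<omega>\<in>E. \<bar>X n \<omega>\<bar> \<le> \<delta> * real n powr (- 1/2))"
      using E by blast
  qed
qed



theorem lemmaF3:
  fixes k :: "'x::polish_space \<Rightarrow> 'x \<Rightarrow> real" and K :: "'x \<Rightarrow> 'hx::{real_inner,banach,second_countable_topology}"
    and l :: "'y::polish_space \<Rightarrow> 'y \<Rightarrow> real" and L :: "'y \<Rightarrow> 'hy::{real_inner,banach,second_countable_topology}"
    and tensor :: "'hx \<Rightarrow> 'hy \<Rightarrow> 'h::{real_inner,banach,second_countable_topology}"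
    and \<P> :: "('x, 'y) model set" and \<eta> :: real and Pstar :: "('x, 'y) model"
    and M :: "'w measure" and Zs :: "nat \<Rightarrow> 'w \<Rightarrow> 'x \<times> bool \<times> 'y"
    and S :: "'v measure" and V :: "nat \<Rightarrow> 'w \<Rightarrow> 'v" and Est :: "nat \<Rightarrow> 'v \<Rightarrow> ('x, 'y) model"
    and \<tau> \<gamma>1 \<gamma>0 :: real
  assumes kK: "rkhs_feature_map k K" "bounded_kernel k" "K \<in> borel_measurable borel" "characteristic K"
    and lL: "rkhs_feature_map l L" "bounded_kernel l" "L \<in> borel_measurable borel" "characteristic L"
    and tens: "tensor_product tensor"
    and eta: "\<eta> > 0"
    and model: "\<forall>P\<in>\<P>. valid_model P \<and> nondegenerate P \<and> strong_positivity \<eta> P"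
    and dom: "dominated \<P>"
    and Pstar: "Pstar \<in> \<P>"
    and M: "prob_space M"
    and Zs_meas: "\<forall>i. Zs i \<in> measurable M Zspace"
    and Zs_law: "\<forall>i. distr M Zspace (Zs i) = dist Pstar"
    and Zs_indep: "prob_space.indep_vars M (\<lambda>_. Zspace) Zs UNIV"
    and V_meas: "\<forall>n. V n \<in> measurable M S"
    and Est_in: "\<forall>n. \<forall>v\<in>space S. Est n v \<in> \<P>"
    and V_indep: "\<forall>n. indep_rv M S (V n) (PiM {..<n} (\<lambda>_. Zspace)) (\<lambda>\<omega>. \<lambda>i\<in>{..<n}. Zs i \<omega>)"
    and tau: "\<tau> > 0" and gamma: "\<gamma>1 > 0" "\<gamma>0 > 0"
    and rate_pi: "bigOp M (\<lambda>n \<omega>. L2_dist_prop Pstar (Est n (V n \<omega>))) (\<lambda>n. real n powr (- \<tau>))"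
    and rate_theta1: "bigOp M (\<lambda>n \<omega>. L2_dist_theta tensor K L Pstar (Est n (V n \<omega>)) True) (\<lambda>n. real n powr (- \<gamma>1))"
    and rate_theta0: "bigOp M (\<lambda>n \<omega>. L2_dist_theta tensor K L Pstar (Est n (V n \<omega>)) False) (\<lambda>n. real n powr (- \<gamma>0))"
  shows "bigOp M (\<lambda>n \<omega>. norm (remainder tensor K L Pstar (Est n (V n \<omega>))))
            (\<lambda>n. real n powr (- (\<tau> + min \<gamma>1 \<gamma>0)))
       \<and> (\<tau> + min \<gamma>1 \<gamma>0 > 1/2 \<longrightarrow>
            littleOp M (\<lambda>n \<omega>. norm (remainder tensor K L Pstar (Est n (V n \<omega>)))) (\<lambda>n. real n powr (- 1/2)))"
proof -
  obtain Bk where Bk: "\<And>x. k x x \<le> Bk" using kK(2) unfolding bounded_kernel_def by blast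
  obtain Bl where Bl: "\<And>y. l y y \<le> Bl" using lL(2) unfolding bounded_kernel_def by blast
  have Kb: "norm (K x) \<le> sqrt Bk" for x
  proof -
    have "k x x = inner (K x) (K x)" using kK(1) unfolding rkhs_feature_map_def by blast
    then show ?thesis using Bk[of x] by (simp add: norm_eq_sqrt_inner)
  qed
  have Lb: "norm (L y) \<le> sqrt Bl" for y
  proof -
    have "l y y = inner (L y) (L y)" using lL(1) unfolding rkhs_feature_map_def by blast
    then show ?thesis using Bl[of y] by (simp add: norm_eq_sqrt_inner)
  qed
  interpret kset tensor K L "sqrt Bk" "sqrt Bl"
    by unfold_locales (use tens kK(3) lL(3) Kb Lb in auto)
  have VPs: "valid_model Pstar" using model Pstar by blast
  define dP where "dP n \<omega> = L2_dist_prop Pstar (Est n (V n \<omega>))" for n \<omega>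
  define d1 where "d1 n \<omega> = L2_dist_theta tensor K L Pstar (Est n (V n \<omega>)) True" for n \<omega>
  define d0 where "d0 n \<omega> = L2_dist_theta tensor K L Pstar (Est n (V n \<omega>)) False" for n \<omega>
  have pt: "\<bar>norm (remainder tensor K L Pstar (Est n (V n \<omega>)))\<bar> \<le> (1/\<eta>) * dP n \<omega> * (d1 n \<omega> + d0 n \<omega>)"
    if w: "\<omega> \<in> space M" for n \<omega>
  proof -
    have "V n \<omega> \<in> space S" using measurable_space[OF V_meas[rule_format, of n] w] .
    then have "Est n (V n \<omega>) \<in> \<P>" using Est_in by blast
    then have Q: "valid_model (Est n (V n \<omega>))" "strong_positivity \<eta> (Est n (V n \<omega>))" using model by auto
    show ?thesis using R_bound[OF VPs Q eta] unfolding dP_def d1_def d0_def by simp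
  qed
  have big: "bigOp M (\<lambda>n \<omega>. norm (remainder tensor K L Pstar (Est n (V n \<omega>))))
            (\<lambda>n. real n powr (- (\<tau> + min \<gamma>1 \<gamma>0)))"
  proof (rule bigOp_combine[OF M _ rate_pi[folded dP_def] rate_theta1[folded d1_def] rate_theta0[folded d0_def] pt])
    show "0 \<le> 1 / \<eta>" using eta by simp
  qed (auto simp: dP_def d1_def d0_def L2_dist_prop_def L2_dist_theta_def intro!: Bochner_Integration.integral_nonneg)
  show ?thesis using big bigOp_littleOp[OF big] by blast
qed


end
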